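(* Let $A=B[x;\alpha,\delta]_p$ be a Poisson polynomial algebra over a field $k$ of characteristic zero, and assume that $\alpha$ extends to a derivation $\hat\alpha$ of $A$ such that $\hat\alpha(x)=sx$ for some nonzero $s\in k$. Then for each Poisson prime ideal $Q$ of $B$, there are at most two $\hat\alpha$-stable Poisson prime ideals $P$ of $A$ with $P\cap B=Q$.
   Context: If $B$ is a Poisson algebra, $\alpha$ a Poisson derivation of $B$ (a derivation for both product and bracket) and $\delta$ a derivation of $B$ with $\delta(\{a,b\})=\{\delta(a),b\}+\{a,\delta(b)\}+\alpha(a)\delta(b)-\delta(a)\alpha(b)$ for all $a,b\in B$, then $B[x;\alpha,\delta]_p$ is the polynomial ring $B[x]$ with the unique Poisson bracket extending that of $B$ and satisfying $\{x,b\}=\alpha(b)x+\delta(b)$. A Poisson prime ideal is a prime ideal $P$ with $\{A,P\}\subseteq P$. *)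

theory Defs
  imports "HOL-Computational_Algebra.Polynomial"
begin

text \<open>A commutative k-algebra is modelled as a commutative ring 'b together with
  a unital ring homomorphism iota from the field 'k into 'b.\<close>

definition alg_hom_from :: "('k::field \<Rightarrow> 'b::comm_ring_1) \<Rightarrow> bool" where
  "alg_hom_from \<iota> \<longleftrightarrow> \<iota> 1 = 1 \<and> (\<forall>c d. \<iota> (c + d) = \<iota> c + \<iota> d) \<and> (\<forall>c d. \<iota> (c * d) = \<iota> c * \<iota> d)"

definition is_kderiv :: "('k::field \<Rightarrow> 'b::comm_ring_1) \<Rightarrow> ('b \<Rightarrow> 'b) \<Rightarrow> bool" where
  "is_kderiv \<iota> D \<longleftrightarrow>
     (\<forall>a b. D (a + b) = D a + D b) \<and>
     (\<forall>c a. D (\<iota> c * a) = \<iota> c * D a) \<and>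
     (\<forall>a b. D (a * b) = D a * b + a * D b)"

definition is_poisson_bracket :: "('k::field \<Rightarrow> 'b::comm_ring_1) \<Rightarrow> ('b \<Rightarrow> 'b \<Rightarrow> 'b) \<Rightarrow> bool" where
  "is_poisson_bracket \<iota> br \<longleftrightarrow>
     (\<forall>a b c. br (a + b) c = br a c + br b c) \<and>
     (\<forall>a b c. br a (b + c) = br a b + br a c) \<and>
     (\<forall>r a b. br (\<iota> r * a) b = \<iota> r * br a b) \<and>
     (\<forall>r a b. br a (\<iota> r * b) = \<iota> r * br a b) \<and>
     (\<forall>a b. br a b = - br b a) \<and>
     (\<forall>a b c. br a (br b c) + br b (br c a) + br c (br a b) = 0) \<and>
     (\<forall>a b c. br a (b * c) = br a b * c + b * br a c)"

definition is_poisson_deriv :: "('k::field \<Rightarrow> 'b::comm_ring_1) \<Rightarrow> ('b \<Rightarrow> 'b \<Rightarrow> 'b) \<Rightarrow> ('b \<Rightarrow> 'b) \<Rightarrow> bool" where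
  "is_poisson_deriv \<iota> br D \<longleftrightarrow> is_kderiv \<iota> D \<and> (\<forall>a b. D (br a b) = br (D a) b + br a (D b))"

definition is_ideal :: "'b::comm_ring_1 set \<Rightarrow> bool" where
  "is_ideal I \<longleftrightarrow> 0 \<in> I \<and> (\<forall>a\<in>I. \<forall>b\<in>I. a + b \<in> I) \<and> (\<forall>r. \<forall>a\<in>I. r * a \<in> I)"

definition is_prime_ideal :: "'b::comm_ring_1 set \<Rightarrow> bool" where
  "is_prime_ideal P \<longleftrightarrow> is_ideal P \<and> P \<noteq> UNIV \<and> (\<forall>a b. a * b \<in> P \<longrightarrow> a \<in> P \<or> b \<in> P)"

definition is_poisson_prime :: "('b::comm_ring_1 \<Rightarrow> 'b \<Rightarrow> 'b) \<Rightarrow> 'b set \<Rightarrow> bool" where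
  "is_poisson_prime br P \<longleftrightarrow> is_prime_ideal P \<and> (\<forall>a. \<forall>p\<in>P. br a p \<in> P)"

end

theory Submission
  imports Defs
begin
locale setting =
  fixes \<iota> :: "'k::field_char_0 \<Rightarrow> 'b::comm_ring_1"
    and brB :: "'b \<Rightarrow> 'b \<Rightarrow> 'b"
    and \<alpha> \<delta> :: "'b \<Rightarrow> 'b"
    and brA :: "'b poly \<Rightarrow> 'b poly \<Rightarrow> 'b poly"
    and ah :: "'b poly \<Rightarrow> 'b poly"
    and s :: 'k
    and Q :: "'b set"
  assumes hom: "alg_hom_from \<iota>"
    and brB: "is_poisson_bracket \<iota> brB"
    and alpha: "is_poisson_deriv \<iota> brB \<alpha>"
    and delta: "is_kderiv \<iota> \<delta>"
    and brA: "is_poisson_bracket (\<lambda>c. [:\<iota> c:]) brA"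
    and brA_ext: "\<forall>a b. brA [:a:] [:b:] = [:brB a b:]"
    and brA_x: "\<forall>b. brA [:0, 1:] [:b:] = [:\<delta> b, \<alpha> b:]"
    and ahat: "is_kderiv (\<lambda>c. [:\<iota> c:]) ah"
    and ahat_ext: "\<forall>b. ah [:b:] = [:\<alpha> b:]"
    and s: "s \<noteq> 0"
    and ahat_x: "ah [:0, 1:] = [:\<iota> s:] * [:0, 1:]"
    and Q: "is_poisson_prime brB Q"
begin

lemma i_add: "\<iota> (a + b) = \<iota> a + \<iota> b" and i_mult: "\<iota> (a * b) = \<iota> a * \<iota> b" and i_1: "\<iota> 1 = 1"
  using hom by (auto simp: alg_hom_from_def)

lemma i_0: "\<iota> 0 = 0"
  using i_add[of 0 0] by simp

lemma i_of_nat: "\<iota> (of_nat k) = of_nat k"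
  by (induction k) (simp_all add: i_0 i_add i_1)

lemma i_unit: "c \<noteq> 0 \<Longrightarrow> \<iota> c * \<iota> (inverse c) = 1"
  by (metis i_mult i_1 right_inverse)

lemma Qideal: "0 \<in> Q" "a \<in> Q \<Longrightarrow> b \<in> Q \<Longrightarrow> a + b \<in> Q" "a \<in> Q \<Longrightarrow> r * a \<in> Q"
  using Q by (auto simp: is_poisson_prime_def is_prime_ideal_def is_ideal_def)

lemma Qprime: "a * b \<in> Q \<Longrightarrow> a \<in> Q \<or> b \<in> Q" and Qne: "Q \<noteq> UNIV"
  and Qpois: "a' \<in> Q \<Longrightarrow> brB r a' \<in> Q"
  using Q by (auto simp: is_poisson_prime_def is_prime_ideal_def)

lemma Qmult2: "a \<in> Q \<Longrightarrow> a * r \<in> Q"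
  using Qideal(3)[of a r] by (simp add: mult.commute)

lemma Qneg: "a \<in> Q \<Longrightarrow> - a \<in> Q"
  using Qideal(3)[of a "-1"] by simp

lemma Qdiff: "a \<in> Q \<Longrightarrow> b \<in> Q \<Longrightarrow> a - b \<in> Q"
  using Qideal(2)[of a "-b"] Qneg by simp

lemma Q1: "1 \<notin> Q"
proof
  assume "1 \<in> Q"
  then have "r \<in> Q" for r using Qideal(3)[of 1 r] by simp
  then show False using Qne by auto
qed

lemma Qunit: "u * v = 1 \<Longrightarrow> u * x \<in> Q \<Longrightarrow> x \<in> Q"
proof -
  assume a: "u * v = 1" "u * x \<in> Q"
  have "x = v * (u * x)" using a(1) by (metis mult.assoc mult.commute mult_1)
  then show ?thesis using Qideal(3)[OF a(2), of v] by simp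
qed

lemma Qnat: "k \<noteq> 0 \<Longrightarrow> of_nat k * x \<in> Q \<Longrightarrow> x \<in> Q"
  using Qunit[of "\<iota> (of_nat k)" "\<iota> (inverse (of_nat k))" x] i_unit[of "of_nat k"] i_of_nat by simp

lemma Qs: "\<iota> s * x \<in> Q \<Longrightarrow> x \<in> Q"
  using Qunit[of "\<iota> s" "\<iota> (inverse s)" x] i_unit[OF s] by simp

lemma Qpow: "c \<notin> Q \<Longrightarrow> c ^ k \<notin> Q"
  by (induction k) (auto simp: Q1 dest: Qprime)

lemma Qsum: "(\<And>i. i \<in> A \<Longrightarrow> f i \<in> Q) \<Longrightarrow> sum f A \<in> Q"
  by (induction A rule: infinite_finite_induct) (auto simp: Qideal)

end

definition derl :: "('a::comm_ring_1 \<Rightarrow> 'a) \<Rightarrow> bool" where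
  "derl D \<longleftrightarrow> (\<forall>a b. D (a + b) = D a + D b) \<and> (\<forall>a b. D (a * b) = D a * b + a * D b)"

lemma derl_add: "derl D \<Longrightarrow> D (a + b) = D a + D b" and derl_mult: "derl D \<Longrightarrow> D (a * b) = D a * b + a * D b"
  by (auto simp: derl_def)

lemma derl_0: "derl D \<Longrightarrow> D 0 = 0"
  using derl_add[of D 0 0] by simp

lemma derl_neg: "derl D \<Longrightarrow> D (- a) = - D a"
  using derl_add[of D a "-a"] derl_0[of D] by (simp add: eq_neg_iff_add_eq_0 add.commute)

lemma derl_diff: "derl D \<Longrightarrow> D (a - b) = D a - D b"
  using derl_add[of D a "-b"] derl_neg[of D b] by simp

lemma derl_1: "derl D \<Longrightarrow> D 1 = 0"
  using derl_mult[of D 1 1] by simp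

lemma derl_of_nat_mult: "derl D \<Longrightarrow> D (of_nat k * a) = of_nat k * D a"
  by (induction k) (simp_all add: derl_0 derl_add distrib_right)

lemma derl_of_nat: "derl D \<Longrightarrow> D (of_nat k) = 0"
  using derl_of_nat_mult[of D k 1] derl_1[of D] by simp

lemma derl_power: "derl D \<Longrightarrow> D (c ^ k) = of_nat k * c ^ (k - 1) * D c"
proof (induction k)
  case 0 then show ?case by (simp add: derl_1)
next
  case (Suc k)
  then show ?case
    by (cases k) (simp_all add: derl_mult algebra_simps)
qed

context setting begin

lemma derl_alpha: "derl \<alpha>" using alpha unfolding derl_def is_poisson_deriv_def is_kderiv_def by blast
lemma derl_delta: "derl \<delta>" using delta unfolding derl_def is_kderiv_def by blast
lemma derl_ah: "derl ah" using ahat unfolding derl_def is_kderiv_def by blast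
lemma derl_brB: "derl (brB b)" using brB unfolding derl_def is_poisson_bracket_def by blast
lemma derl_brA: "derl (brA p)" using brA unfolding derl_def is_poisson_bracket_def by blast

lemma brB_antisym: "brB a b = - brB b a" using brB unfolding is_poisson_bracket_def by blast
lemma brA_antisym: "brA a b = - brA b a" using brA unfolding is_poisson_bracket_def by blast

lemma brB_self: "brB a a = 0"
proof -
  have h: "brB a a + brB a a = 0" by (metis brB_antisym add.left_inverse)
  then have h2: "2 * brB a a = 0" by (simp only: mult_2)
  have e2: "\<iota> 2 = (2::'b)" using i_of_nat[of 2] by simp
  have u: "\<iota> (inverse 2) * \<iota> 2 = 1" using i_unit[of 2] by (simp add: mult.commute)
  have "brB a a = (\<iota> (inverse 2) * \<iota> 2) * brB a a" using u by simp
  also have "\<dots> = \<iota> (inverse 2) * (2 * brB a a)" using e2 by (simp only: mult.assoc)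
  also have "\<dots> = 0" using h2 by simp
  finally show ?thesis .
qed

end

context setting begin

lemma coeff_ah: "coeff (ah p) i = \<alpha> (coeff p i) + of_nat i * \<iota> s * coeff p i"
proof (induction p arbitrary: i rule: pCons_induct)
  case 0 then show ?case using derl_0[OF derl_ah] derl_0[OF derl_alpha] by simp
next
  case (pCons a p)
  have eq: "pCons a p = [:a:] + [:0,1:] * p" by simp
  have "ah (pCons a p) = ah [:a:] + (ah [:0,1:] * p + [:0,1:] * ah p)"
    by (subst eq) (simp only: derl_add[OF derl_ah] derl_mult[OF derl_ah])
  also have "\<dots> = [:\<alpha> a:] + ([:\<iota> s:] * pCons 0 p + pCons 0 (ah p))"
    by (simp add: ahat_ext ahat_x mult.assoc)
  finally have e2: "ah (pCons a p) = [:\<alpha> a:] + (smult (\<iota> s) (pCons 0 p) + pCons 0 (ah p))" by simp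
  show ?case using pCons.IH unfolding e2
    by (cases i) (simp_all add: derl_0[OF derl_alpha] algebra_simps)
qed

lemma brA_bX: "brA [:b:] [:0, 1:] = - [:\<delta> b, \<alpha> b:]"
  using brA_antisym[of "[:b:]" "[:0,1:]"] brA_x by simp

lemma coeff_brA: "coeff (brA [:b:] p) i = brB b (coeff p i) - of_nat i * \<alpha> b * coeff p i
   - of_nat (Suc i) * coeff p (Suc i) * \<delta> b"
proof (induction p arbitrary: i rule: pCons_induct)
  case 0 then show ?case using derl_0[OF derl_brA] derl_0[OF derl_brB] by simp
next
  case (pCons a p)
  have eq: "pCons a p = [:a:] + [:0,1:] * p" by simp
  have "brA [:b:] (pCons a p) = brA [:b:] [:a:] + (brA [:b:] [:0,1:] * p + [:0,1:] * brA [:b:] p)"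
    by (subst eq) (simp only: derl_add[OF derl_brA] derl_mult[OF derl_brA])
  also have "\<dots> = [:brB b a:] + (- (smult (\<delta> b) p + pCons 0 (smult (\<alpha> b) p)) + pCons 0 (brA [:b:] p))"
    by (simp add: brA_ext brA_bX)
  finally have e2: "brA [:b:] (pCons a p) = [:brB b a:] + (- (smult (\<delta> b) p + pCons 0 (smult (\<alpha> b) p)) + pCons 0 (brA [:b:] p))" .
  show ?case using pCons.IH unfolding e2
    by (cases i) (simp_all add: derl_0[OF derl_brB] algebra_simps)
qed

end

definition qa :: "'b::comm_ring_1 set \<Rightarrow> 'b poly set" where
  "qa Q = {p. \<forall>i. coeff p i \<in> Q}"

context setting begin

lemma qa_coeff: "p \<in> qa Q \<Longrightarrow> coeff p i \<in> Q" by (simp add: qa_def)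

lemma qa_0: "0 \<in> qa Q" by (simp add: qa_def Qideal)

lemma qa_add: "p \<in> qa Q \<Longrightarrow> q \<in> qa Q \<Longrightarrow> p + q \<in> qa Q"
  by (simp add: qa_def Qideal)

lemma qa_diff: "p \<in> qa Q \<Longrightarrow> q \<in> qa Q \<Longrightarrow> p - q \<in> qa Q"
  by (simp add: qa_def Qdiff)

lemma qa_mult: "q \<in> qa Q \<Longrightarrow> r * q \<in> qa Q"
  by (simp add: qa_def coeff_mult Qsum Qideal(3))

lemma qa_mult2: "q \<in> qa Q \<Longrightarrow> q * r \<in> qa Q"
  using qa_mult[of q r] by (simp add: mult.commute)

lemma qa_smult: "q \<in> qa Q \<Longrightarrow> smult t q \<in> qa Q"
  using qa_mult[of q "[:t:]"] by simp

lemma qa_const: "q \<in> Q \<Longrightarrow> [:q:] \<in> qa Q"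
  by (simp add: qa_def coeff_pCons Qideal split: nat.split)

lemma qa_ah: "(\<And>q. q \<in> Q \<Longrightarrow> \<alpha> q \<in> Q) \<Longrightarrow> p \<in> qa Q \<Longrightarrow> ah p \<in> qa Q"
  by (simp add: qa_def coeff_ah Qideal)

lemma qa_brA: "(\<And>q. q \<in> Q \<Longrightarrow> \<delta> q \<in> Q) \<Longrightarrow> p \<in> qa Q \<Longrightarrow> brA [:b:] p \<in> qa Q"
  by (simp add: qa_def coeff_brA Qideal Qdiff Qpois Qmult2)

definition eig :: "('b poly \<Rightarrow> 'b poly) \<Rightarrow> 'b \<Rightarrow> 'b \<Rightarrow> 'b poly \<Rightarrow> bool" where
  "eig D d l p \<longleftrightarrow> smult d (D p) - smult l p \<in> qa Q"

lemma eig_mult: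
  assumes D: "derl D" and 1: "eig D d1 l1 p" and 2: "eig D d2 l2 q"
  shows "eig D (d1 * d2) (l1 * d2 + d1 * l2) (p * q)"
proof -
  have "smult (d1 * d2) (D (p * q)) - smult (l1 * d2 + d1 * l2) (p * q)
     = (smult d1 (D p) - smult l1 p) * (smult d2 q) + (smult d2 (D q) - smult l2 q) * (smult d1 p)"
    by (simp add: derl_mult[OF D] algebra_simps smult_add_left smult_add_right smult_diff_left
        smult_diff_right mult_smult_left mult_smult_right)
  then show ?thesis using 1 2 unfolding eig_def by (simp add: qa_add qa_mult2 qa_smult)
qed

lemma eig_pow:
  assumes D: "derl D" and 1: "eig D d l p"
  shows "eig D (d ^ k) (of_nat k * d ^ (k - 1) * l) (p ^ k)"
proof (induction k)
  case 0
  then show ?case by (simp add: eig_def derl_1[OF D] qa_0)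
next
  case (Suc k)
  have "eig D (d * d ^ k) (l * d ^ k + d * (of_nat k * d ^ (k - 1) * l)) (p * p ^ k)"
    by (rule eig_mult[OF D 1 Suc])
  moreover have "l * d ^ k + d * (of_nat k * d ^ (k - 1) * l) = of_nat (Suc k) * d ^ (Suc k - 1) * l"
    by (cases k) (simp_all add: algebra_simps)
  ultimately show ?case by simp
qed

lemma eig_nat:
  assumes D: "derl D" and 1: "eig D d l p"
  shows "eig D d l (of_nat k * p)"
proof -
  have "smult d (D (of_nat k * p)) - smult l (of_nat k * p) = of_nat k * (smult d (D p) - smult l p)"
    by (simp add: derl_of_nat_mult[OF D] right_diff_distrib mult_smult_right)
  then show ?thesis using 1 unfolding eig_def by (simp add: qa_mult)
qed

lemma eig_diff:
  assumes D: "derl D" and 1: "eig D d l p" and 2: "eig D d l q"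
  shows "eig D d l (p - q)"
proof -
  have "smult d (D (p - q)) - smult l (p - q) = (smult d (D p) - smult l p) - (smult d (D q) - smult l q)"
    by (simp add: derl_diff[OF D] smult_diff_right)
  then show ?thesis using 1 2 unfolding eig_def by (simp add: qa_diff)
qed

lemma eig_scale:
  assumes 1: "eig D d l p"
  shows "eig D (t * d) (t * l) p"
proof -
  have "smult (t * d) (D p) - smult (t * l) p = smult t (smult d (D p) - smult l p)"
    by (simp add: smult_diff_right)
  then show ?thesis using 1 unfolding eig_def by (simp add: qa_smult)
qed

end

locale primeP = setting +
  fixes P :: "'b poly set"
  assumes Pp: "is_poisson_prime brA P" and Pstab: "ah ` P \<subseteq> P" and Pcontr: "{b. [:b:] \<in> P} = Q"
begin

lemma P0: "0 \<in> P" and Padd: "a \<in> P \<Longrightarrow> b \<in> P \<Longrightarrow> a + b \<in> P" and Pmult: "a \<in> P \<Longrightarrow> r * a \<in> P"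
  and Pprime: "a * b \<in> P \<Longrightarrow> a \<in> P \<or> b \<in> P" and Ppois: "p \<in> P \<Longrightarrow> brA r p \<in> P"
  using Pp by (auto simp: is_poisson_prime_def is_prime_ideal_def is_ideal_def)

lemma Pah: "p \<in> P \<Longrightarrow> ah p \<in> P" using Pstab by auto

lemma Pneg: "a \<in> P \<Longrightarrow> - a \<in> P" using Pmult[of a "-1"] by simp

lemma Pdiff: "a \<in> P \<Longrightarrow> b \<in> P \<Longrightarrow> a - b \<in> P" using Padd[of a "-b"] Pneg by simp

lemma Pconst: "[:b:] \<in> P \<longleftrightarrow> b \<in> Q" using Pcontr by auto

lemma Ppow: "p ^ k \<in> P \<Longrightarrow> k \<noteq> 0 \<Longrightarrow> p \<in> P"
proof (induction k)
  case 0 then show ?case by simp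
next
  case (Suc k) then show ?case by (cases k) (auto dest: Pprime)
qed

lemma Pcancel: "[:c:] * p \<in> P \<Longrightarrow> c \<notin> Q \<Longrightarrow> p \<in> P"
  using Pprime Pconst by blast

lemma alphaQ: "q \<in> Q \<Longrightarrow> \<alpha> q \<in> Q"
  using Pah[of "[:q:]"] by (simp add: Pconst ahat_ext)

lemma deltaQ: "q \<in> Q \<Longrightarrow> \<delta> q \<in> Q"
proof -
  assume q: "q \<in> Q"
  have "brA [:0,1:] [:q:] \<in> P" using q Ppois Pconst by blast
  then have "[:\<delta> q, \<alpha> q:] \<in> P" using brA_x by simp
  moreover have "[:0,1:] * [:\<alpha> q:] \<in> P" using Pmult alphaQ[OF q] Pconst by blast
  ultimately have "[:\<delta> q, \<alpha> q:] - [:0,1:] * [:\<alpha> q:] \<in> P" by (rule Pdiff)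
  then show ?thesis by (simp add: Pconst)
qed

lemma qa_sub: "p \<in> qa Q \<Longrightarrow> p \<in> P"
proof (induction p rule: pCons_induct)
  case 0 show ?case by (rule P0)
next
  case (pCons a p)
  have a: "a \<in> Q" and p: "p \<in> qa Q" using pCons.prems
    by (auto simp: qa_def) (metis coeff_pCons_0, metis coeff_pCons_Suc)
  have "[:a:] + [:0,1:] * p \<in> P"
    using Padd Pmult pCons.IH[OF p] a Pconst by blast
  then show ?case by simp
qed

lemma qa_ahP: "p \<in> qa Q \<Longrightarrow> ah p \<in> qa Q" using qa_ah alphaQ by blast
lemma qa_brAP: "p \<in> qa Q \<Longrightarrow> brA [:b:] p \<in> qa Q" using qa_brA deltaQ by blast

end

lemma derl_mult_of_nat: "derl D \<Longrightarrow> D (a * of_nat k) = of_nat k * D a"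
  using derl_of_nat_mult[of D k a] by (simp add: mult.commute)

lemma ring_id1:
  fixes R N Mm cn cm c g ac bcg :: "'a::comm_ring_1"
  assumes "R = N - Mm" "cn = cm * c"
  shows "cn * (bcg + R * ac * g) = cn * (bcg - Mm * ac * g) - (N * cm * (0 - c * ac)) * g"
  by (simp only: assms) (simp add: algebra_simps)

lemma ring_id2:
  fixes R N Mm cn cm c g ac ag bcg s :: "'a::comm_ring_1"
  assumes "R = N - Mm" "cn = cm * c"
  shows "R * (R * (s * (cn * (g * g)))) = (cn * (0 - Mm * ag * g) - (N * cm * (- bcg - c * ag)) * g)
     - R * g * (cn * (ag + Mm * s * g) - N * cm * (ac + s * c) * g) - N * cm * g * (bcg + R * ac * g)"
  by (simp only: assms) (simp add: algebra_simps)

lemma const_pow: "[:c:] ^ k = [:c ^ k:]"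
  by (induction k) (simp_all add: mult.commute)

lemma linpow_deg: "degree ([:e, l:] ^ k) \<le> k"
proof -
  have "degree ([:e, l:] ^ k) \<le> degree [:e, l:] * k" by (rule degree_power_le)
  also have "\<dots> \<le> k" by simp
  finally show ?thesis .
qed

lemma linpow_coeff: "coeff ([:e, l:] ^ Suc j) (Suc j) = l ^ Suc j \<and> coeff ([:e, l:] ^ Suc j) j = of_nat (Suc j) * l ^ j * e"
proof (induction j)
  case 0 then show ?case by simp
next
  case (Suc j)
  define q where "q = [:e, l:] ^ Suc j"
  have eq: "[:e, l:] ^ Suc (Suc j) = smult e q + pCons 0 (smult l q)"
    unfolding q_def power_Suc[of "[:e,l:]" "Suc j"] by (simp add: mult_pCons_left del: power_Suc)
  have z: "coeff q (Suc (Suc j)) = 0"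
    by (rule coeff_eq_0) (use linpow_deg[of e l "Suc j"] in \<open>simp add: q_def del: power_Suc\<close>)
  have IH: "coeff q (Suc j) = l ^ Suc j" "coeff q j = of_nat (Suc j) * l ^ j * e"
    using Suc unfolding q_def by blast+
  show ?case unfolding eq using IH z by (simp add: algebra_simps)
qed

context primeP begin

lemma Psmult: "p \<in> P \<Longrightarrow> smult a p \<in> P"
  using Pmult[of p "[:a:]"] by simp

lemma eig_conv: "eig D d1 l1 p \<Longrightarrow> d1 = d \<Longrightarrow> l1 = l \<Longrightarrow> eig D d l p" by simp

lemma exists_linear:
  assumes f0: "f0 \<in> P" "f0 \<notin> qa Q"
  shows "\<exists>l e. l \<notin> Q \<and> [:e, l:] \<in> P"
proof -
  define n where "n = (LEAST n. \<exists>f\<in>P. f \<notin> qa Q \<and> degree f = n)"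
  have "\<exists>f\<in>P. f \<notin> qa Q \<and> degree f = n"
    unfolding n_def by (rule LeastI[of _ "degree f0"]) (use f0 in auto)
  then obtain f where f: "f \<in> P" "f \<notin> qa Q" "degree f = n" by blast
  have minl: "n \<le> degree g" if "g \<in> P" "g \<notin> qa Q" for g
    unfolding n_def by (rule Least_le) (use that in auto)
  define c where "c = coeff f n"
  have low: "h \<in> qa Q" if h: "h \<in> P" "degree h \<le> n" "coeff h n = 0" for h
  proof (rule ccontr)
    assume nq: "h \<notin> qa Q"
    then have "h \<noteq> 0" using qa_0 by auto
    then have "degree h \<noteq> n" using h(3) leading_coeff_0_iff by blast
    then show False using minl[OF h(1) nq] h(2) by simp
  qed
  have cQ: "c \<notin> Q"
  proof
    assume cq: "c \<in> Q"
    have mq: "monom c n \<in> qa Q" using cq by (simp add: qa_def coeff_monom Qideal)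
    have "f - monom c n \<in> qa Q"
      by (rule low) (use f mq qa_sub Pdiff in \<open>auto simp: c_def degree_monom_le intro: degree_diff_le\<close>)
    then have "f - monom c n + monom c n \<in> qa Q" using mq qa_add by blast
    then show False using f by simp
  qed
  have n0: "n \<noteq> 0"
  proof
    assume "n = 0"
    then have "f = [:c:]" using f(3) c_def by (metis degree_0_id)
    then show False using f(1) cQ Pconst by simp
  qed
  then obtain m where nm: "n = Suc m" by (cases n) auto
  define e where "e = coeff f m"
  have fz: "coeff f i = 0" if "i > n" for i using f(3) that by (simp add: coeff_eq_0)
  have red: "eig D c (coeff (D f) n) f" if "D f \<in> P" "degree (D f) \<le> n" for D
    unfolding eig_def
  proof (rule low)
    show "smult c (D f) - smult (coeff (D f) n) f \<in> P" using f that by (intro Pdiff Psmult)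
    have "degree (smult c (D f)) \<le> n" "degree (smult (coeff (D f) n) f) \<le> n"
      using that f by (auto intro: order.trans[OF degree_smult_le])
    then show "degree (smult c (D f) - smult (coeff (D f) n) f) \<le> n"
      by (rule degree_diff_le)
    show "coeff (smult c (D f) - smult (coeff (D f) n) f) n = 0" by (simp add: c_def mult.commute)
  qed
  have ahdeg: "degree (ah f) \<le> n" by (rule degree_le) (simp add: coeff_ah fz derl_0[OF derl_alpha])
  have R1: "eig ah c (\<alpha> c + of_nat n * \<iota> s * c) f"
    using red[of ah] Pah[OF f(1)] ahdeg by (simp add: coeff_ah c_def)
  have brdeg: "degree (brA [:b:] f) \<le> n" for b
    by (rule degree_le) (simp add: coeff_brA fz derl_0[OF derl_brB])
  have R2: "eig (brA [:b:]) c (brB b c - of_nat n * \<alpha> b * c) f" for b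
    using red[of "brA [:b:]"] Ppois[OF f(1)] brdeg[of b] by (simp add: coeff_brA c_def fz)
  have E1: "c * \<alpha> e - \<alpha> c * e - \<iota> s * c * e \<in> Q"
  proof -
    have "coeff (smult c (ah f) - smult (\<alpha> c + of_nat n * \<iota> s * c) f) m \<in> Q"
      using R1 unfolding eig_def by (rule qa_coeff)
    moreover have "coeff (smult c (ah f) - smult (\<alpha> c + of_nat n * \<iota> s * c) f) m = c * \<alpha> e - \<alpha> c * e - \<iota> s * c * e"
      by (simp add: coeff_ah e_def nm algebra_simps)
    ultimately show ?thesis by simp
  qed
  have E3: "c * brB b e - of_nat n * c * c * \<delta> b - brB b c * e + c * \<alpha> b * e \<in> Q" for b
  proof -
    have "coeff (smult c (brA [:b:] f) - smult (brB b c - of_nat n * \<alpha> b * c) f) m \<in> Q"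
      using R2[of b] unfolding eig_def by (rule qa_coeff)
    moreover have "coeff (smult c (brA [:b:] f) - smult (brB b c - of_nat n * \<alpha> b * c) f) m
        = c * brB b e - of_nat n * c * c * \<delta> b - brB b c * e + c * \<alpha> b * e"
      by (simp add: coeff_brA e_def nm c_def algebra_simps)
    ultimately show ?thesis by simp
  qed
  define N :: 'b where "N = of_nat n"
  define \<phi> where "\<phi> = [:e, N * c:]"
  have Phi1: "eig ah c (\<alpha> c + \<iota> s * c) \<phi>"
    unfolding eig_def qa_def
  proof (clarify)
    fix i
    show "coeff (smult c (ah \<phi>) - smult (\<alpha> c + \<iota> s * c) \<phi>) i \<in> Q"
    proof (cases i)
      case 0
      then show ?thesis using E1 by (simp add: \<phi>_def coeff_ah algebra_simps)
    next
      case (Suc j)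
      then show ?thesis
        by (cases j) (simp_all add: \<phi>_def coeff_ah N_def derl_of_nat_mult[OF derl_alpha] derl_mult_of_nat[OF derl_alpha] derl_0[OF derl_alpha] algebra_simps Qideal)
    qed
  qed
  have Phi2: "eig (brA [:b:]) c (brB b c - c * \<alpha> b) \<phi>" for b
    unfolding eig_def qa_def
  proof (clarify)
    fix i
    show "coeff (smult c (brA [:b:] \<phi>) - smult (brB b c - c * \<alpha> b) \<phi>) i \<in> Q"
    proof (cases i)
      case 0
      have "coeff (smult c (brA [:b:] \<phi>) - smult (brB b c - c * \<alpha> b) \<phi>) i
          = c * brB b e - of_nat n * c * c * \<delta> b - brB b c * e + c * \<alpha> b * e"
        using 0 by (simp add: \<phi>_def coeff_brA N_def algebra_simps)
      then show ?thesis using E3[of b] by simp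
    next
      case (Suc j)
      then show ?thesis
        by (cases j) (simp_all add: \<phi>_def coeff_brA N_def derl_of_nat_mult[OF derl_brB] derl_mult_of_nat[OF derl_brB] derl_0[OF derl_brB] algebra_simps Qideal)
    qed
  qed
  have EC1: "eig ah c (\<alpha> c) [:c:]" unfolding eig_def by (simp add: ahat_ext algebra_simps qa_0)
  have EC2: "eig (brA [:b:]) c (brB b c) [:c:]" for b unfolding eig_def by (simp add: brA_ext algebra_simps qa_0)
  define lam where "lam = of_nat n * c ^ m * (\<alpha> c + \<iota> s * c)"
  define mu where "mu b = of_nat n * c ^ m * (brB b c - c * \<alpha> b)" for b
  have cn: "c ^ n = c ^ m * c" by (simp add: nm mult.commute)
  have P2: "eig ah (c ^ m * c) (of_nat m * c ^ (m - 1) * \<alpha> c * c + c ^ m * (\<alpha> c + of_nat n * \<iota> s * c)) ([:c:] ^ m * f)"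
    by (rule eig_mult[OF derl_ah eig_pow[OF derl_ah EC1] R1])
  have P2': "eig ah (c ^ n) lam ([:c:] ^ m * f)"
    by (rule eig_conv[OF P2]) (simp add: cn, cases m, simp_all add: lam_def nm algebra_simps)
  have P3: "eig ah (c ^ n) (of_nat n * c ^ (n - 1) * (\<alpha> c + \<iota> s * c)) (\<phi> ^ n)"
    by (rule eig_pow[OF derl_ah Phi1])
  have P3': "eig ah (c ^ n) lam (\<phi> ^ n)"
    by (rule eig_conv[OF P3]) (simp_all add: lam_def nm)
  have Q2: "eig (brA [:b:]) (c ^ m * c) (of_nat m * c ^ (m - 1) * brB b c * c + c ^ m * (brB b c - of_nat n * \<alpha> b * c)) ([:c:] ^ m * f)" for b
    by (rule eig_mult[OF derl_brA eig_pow[OF derl_brA EC2] R2])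
  have Q2': "eig (brA [:b:]) (c ^ n) (mu b) ([:c:] ^ m * f)" for b
    by (rule eig_conv[OF Q2[of b]]) (simp add: cn, cases m, simp_all add: mu_def nm algebra_simps)
  have Q3: "eig (brA [:b:]) (c ^ n) (of_nat n * c ^ (n - 1) * (brB b c - c * \<alpha> b)) (\<phi> ^ n)" for b
    by (rule eig_pow[OF derl_brA Phi2])
  have Q3': "eig (brA [:b:]) (c ^ n) (mu b) (\<phi> ^ n)" for b
    by (rule eig_conv[OF Q3[of b]]) (simp_all add: mu_def nm)
  define G where "G = of_nat (n ^ n) * ([:c:] ^ m * f) - \<phi> ^ n"
  have GA: "eig ah (c ^ n) lam G"
    unfolding G_def by (rule eig_diff[OF derl_ah eig_nat[OF derl_ah P2'] P3'])
  have GB: "eig (brA [:b:]) (c ^ n) (mu b) G" for b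
    unfolding G_def by (rule eig_diff[OF derl_brA eig_nat[OF derl_brA Q2'] Q3'])
  have phideg: "degree (\<phi> ^ n) \<le> n" unfolding \<phi>_def by (rule linpow_deg)
  have phic: "coeff (\<phi> ^ n) n = (N * c) ^ n" "coeff (\<phi> ^ n) m = of_nat n * (N * c) ^ m * e"
    using linpow_coeff[of e "N * c" m] unfolding \<phi>_def nm by auto
  have coefG: "coeff G i = of_nat (n ^ n) * c ^ m * coeff f i - coeff (\<phi> ^ n) i" for i
    unfolding G_def by (simp add: of_nat_poly const_pow)
  have Gz: "coeff G i = 0" if im: "i \<ge> m" for i
  proof -
    have on: "N ^ n = N * N ^ m" unfolding nm by simp
    have cnn: "c ^ n = c * c ^ m" unfolding nm by simp
    consider "i = m" | "i = n" | "i > n" using im nm by linarith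
    then show ?thesis
    proof cases
      case 1 then show ?thesis using phic by (simp add: coefG on power_mult_distrib flip: e_def N_def)
    next
      case 2 then show ?thesis using phic
        by (simp add: coefG on power_mult_distrib cnn flip: c_def N_def)
    next
      case 3 then show ?thesis using phideg fz by (simp add: coefG coeff_eq_0)
    qed
  qed
  have GQ: "G \<in> qa Q"
  proof (rule ccontr)
    assume nG: "G \<notin> qa Q"
    define S where "S = {i. coeff G i \<notin> Q}"
    have Sne: "S \<noteq> {}" using nG by (auto simp: S_def qa_def)
    have Sb: "S \<subseteq> {..<m}"
    proof
      fix i assume "i \<in> S"
      then have "coeff G i \<notin> Q" by (simp add: S_def)
      then show "i \<in> {..<m}" using Gz Qideal(1) by (metis lessThan_iff not_le)
    qed
    then have fin: "finite S" using finite_subset by blast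
    define M where "M = Max S"
    have MS: "M \<in> S" unfolding M_def using fin Sne by (rule Max_in)
    have gQ: "coeff G M \<notin> Q" using MS by (simp add: S_def)
    have Mm: "M < m" using MS Sb by auto
    have GS: "coeff G (Suc M) \<in> Q"
    proof (rule ccontr)
      assume "coeff G (Suc M) \<notin> Q"
      then have "Suc M \<in> S" by (simp add: S_def)
      then have "Suc M \<le> M" unfolding M_def using fin by (simp add: Max_ge)
      then show False by simp
    qed
    define g where "g = coeff G M"
    have A1: "c ^ n * (\<alpha> g + of_nat M * \<iota> s * g) - lam * g \<in> Q"
    proof -
      have "coeff (smult (c ^ n) (ah G) - smult lam G) M \<in> Q"
        using GA unfolding eig_def by (rule qa_coeff)
      then show ?thesis by (simp add: coeff_ah g_def)
    qed
    have A2: "c ^ n * (brB b g - of_nat M * \<alpha> b * g) - mu b * g \<in> Q" for b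
    proof -
      have "coeff (smult (c ^ n) (brA [:b:] G) - smult (mu b) G) M \<in> Q"
        using GB[of b] unfolding eig_def by (rule qa_coeff)
      then have "c ^ n * (brB b g - of_nat M * \<alpha> b * g - of_nat (Suc M) * coeff G (Suc M) * \<delta> b) - mu b * g \<in> Q"
        by (simp add: coeff_brA g_def)
      moreover have "c ^ n * (of_nat (Suc M) * coeff G (Suc M) * \<delta> b) \<in> Q"
        using GS by (simp add: Qideal(3) Qmult2 mult.assoc)
      ultimately have "(c ^ n * (brB b g - of_nat M * \<alpha> b * g - of_nat (Suc M) * coeff G (Suc M) * \<delta> b) - mu b * g)
          + c ^ n * (of_nat (Suc M) * coeff G (Suc M) * \<delta> b) \<in> Q" by (rule Qideal(2))
      then show ?thesis by (simp add: algebra_simps)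
    qed
    define R :: 'b where "R = of_nat (n - M)"
    have RNM: "R = N - of_nat M" unfolding R_def N_def using Mm nm by (simp add: of_nat_diff)
    have K1: "brB c g + R * \<alpha> c * g \<in> Q"
    proof -
      have "c ^ n * (brB c g + R * \<alpha> c * g) = c ^ n * (brB c g - of_nat M * \<alpha> c * g) - (N * c ^ m * (0 - c * \<alpha> c)) * g"
        by (rule ring_id1[OF RNM cn])
      also have "\<dots> \<in> Q" using A2[of c] by (simp add: mu_def brB_self N_def)
      finally show ?thesis using Qprime Qpow[OF cQ] by blast
    qed
    have T: "R * (R * (\<iota> s * (c ^ n * (g * g)))) \<in> Q"
    proof -
      have "R * (R * (\<iota> s * (c ^ n * (g * g)))) = (c ^ n * (0 - of_nat M * \<alpha> g * g) - (N * c ^ m * (- brB c g - c * \<alpha> g)) * g)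
         - R * g * (c ^ n * (\<alpha> g + of_nat M * \<iota> s * g) - N * c ^ m * (\<alpha> c + \<iota> s * c) * g) - N * c ^ m * g * (brB c g + R * \<alpha> c * g)"
        by (rule ring_id2[OF RNM cn])
      also have "\<dots> \<in> Q"
      proof (rule Qdiff[OF Qdiff])
        show "c ^ n * (0 - of_nat M * \<alpha> g * g) - N * c ^ m * (- brB c g - c * \<alpha> g) * g \<in> Q"
          using A2[of g] by (simp add: mu_def brB_self N_def brB_antisym[of g c])
        show "R * g * (c ^ n * (\<alpha> g + of_nat M * \<iota> s * g) - N * c ^ m * (\<alpha> c + \<iota> s * c) * g) \<in> Q"
          using A1 by (simp add: lam_def N_def Qideal(3))
        show "N * c ^ m * g * (brB c g + R * \<alpha> c * g) \<in> Q" using K1 by (rule Qideal(3))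
      qed
      finally show ?thesis .
    qed
    have nM: "n - M \<noteq> 0" using Mm nm by simp
    have "c ^ n * (g * g) \<in> Q" using T unfolding R_def by (metis Qnat[OF nM] Qs)
    then show False using Qpow[OF cQ] gQ g_def Qprime by blast
  qed
  have "of_nat (n ^ n) * ([:c:] ^ m * f) \<in> P" using f(1) by (intro Pmult)
  then have "of_nat (n ^ n) * ([:c:] ^ m * f) - G \<in> P" using qa_sub[OF GQ] by (rule Pdiff)
  then have "\<phi> ^ n \<in> P" by (simp add: G_def)
  then have "\<phi> \<in> P" using Ppow n0 by blast
  moreover have "N * c \<notin> Q" using cQ Qnat[OF n0] unfolding N_def by blast
  ultimately show ?thesis unfolding \<phi>_def by blast
qed
end

lemma lin_div:
  fixes c e :: "'b::comm_ring_1"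
  shows "\<exists>k q r. smult (c ^ k) g = q * [:e, c:] + [:r:]"
proof (induction g rule: pCons_induct)
  case 0 then show ?case by (rule exI[of _ 0], rule exI[of _ 0], rule exI[of _ 0]) simp
next
  case (pCons a p)
  then obtain k q r where IH: "smult (c ^ k) p = q * [:e, c:] + [:r:]" by blast
  have "smult (c ^ Suc k) (pCons a p) = pCons (c ^ Suc k * a) (smult c (smult (c ^ k) p))"
    by simp
  also have "\<dots> = pCons (c ^ Suc k * a) (smult c (q * [:e, c:] + [:r:]))" by (simp only: IH)
  also have "\<dots> = (pCons 0 (smult c q) + [:r:]) * [:e, c:] + [:c ^ Suc k * a - r * e:]"
    by (simp add: algebra_simps mult_pCons_left mult_pCons_right smult_add_right)
  finally show ?case by blast
qed

lemma ring_id3: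
  fixes c1 c2 e1 e2 X1 X2 Y1 Y2 a d :: "'a::comm_ring_1"
  shows "c2 * c2 * (c1 * X1 - c1 * c1 * d - Y1 * e1 + c1 * a * e1) - c1 * c1 * (c2 * X2 - c2 * c2 * d - Y2 * e2 + c2 * a * e2)
   = (c1 * c2) * (c2 * X1 + e1 * Y2 - (c1 * X2 + e2 * Y1)) - (c2 * e1 - c1 * e2) * (c1 * Y2 + c2 * Y1)
     + (c1 * c2) * (c2 * e1 - c1 * e2) * a"
  by (simp add: algebra_simps)

lemma ring_id4:
  fixes c1 c2 e1 e2 ae1 ae2 ac1 ac2 s :: "'a::comm_ring_1"
  shows "c2 * c2 * (c1 * ae1 - ac1 * e1 - s * c1 * e1) - c1 * c1 * (c2 * ae2 - ac2 * e2 - s * c2 * e2)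
   = (c1 * c2) * (c2 * ae1 + e1 * ac2 - (c1 * ae2 + e2 * ac1)) - (c2 * e1 - c1 * e2) * (c1 * ac2 + c2 * ac1)
     - s * (c1 * c2) * (c2 * e1 - c1 * e2)"
  by (simp add: algebra_simps)

lemma ring_id5:
  fixes C w bCw aw aC s :: "'a::comm_ring_1"
  shows "s * (C * (w * w)) = (C * 0 - w * (- bCw) + C * w * aw) - w * (bCw + w * aC) - w * (C * aw - w * aC - s * C * w)"
  by (simp add: algebra_simps)

context primeP begin

lemma lin_coef:
  assumes phi: "[:e, c:] \<in> P" and g: "g \<in> P" "degree g \<le> 1"
  shows "c * coeff g 0 - coeff g 1 * e \<in> Q"
proof -
  have h: "smult c g - smult (coeff g 1) [:e, c:] \<in> P" using phi g by (intro Pdiff Psmult)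
  have "smult c g - smult (coeff g 1) [:e, c:] = [:c * coeff g 0 - coeff g 1 * e:]"
  proof (rule poly_eqI)
    fix i show "coeff (smult c g - smult (coeff g 1) [:e, c:]) i = coeff [:c * coeff g 0 - coeff g 1 * e:] i"
    proof (cases i)
      case 0 then show ?thesis by simp
    next
      case (Suc j) then show ?thesis using g(2) by (cases j) (auto simp: coeff_eq_0 mult.commute)
    qed
  qed
  then show ?thesis using h Pconst by simp
qed

lemma lin_rel:
  assumes phi: "[:e, c:] \<in> P"
  shows "c * \<alpha> e - \<alpha> c * e - \<iota> s * c * e \<in> Q"
    and "c * brB b e - c * c * \<delta> b - brB b c * e + c * \<alpha> b * e \<in> Q"
proof -
  have d1: "degree (ah [:e, c:]) \<le> 1"
    by (rule degree_le) (auto simp: coeff_ah derl_0[OF derl_alpha] coeff_pCons split: nat.split)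
  have "c * coeff (ah [:e, c:]) 0 - coeff (ah [:e, c:]) 1 * e \<in> Q"
    by (rule lin_coef[OF phi Pah[OF phi] d1])
  then show "c * \<alpha> e - \<alpha> c * e - \<iota> s * c * e \<in> Q" by (simp add: coeff_ah algebra_simps)
  have d2: "degree (brA [:b:] [:e, c:]) \<le> 1"
    by (rule degree_le) (auto simp: coeff_brA derl_0[OF derl_brB] coeff_pCons split: nat.split)
  have "c * coeff (brA [:b:] [:e, c:]) 0 - coeff (brA [:b:] [:e, c:]) 1 * e \<in> Q"
    by (rule lin_coef[OF phi Ppois[OF phi] d2])
  then show "c * brB b e - c * c * \<delta> b - brB b c * e + c * \<alpha> b * e \<in> Q" by (simp add: coeff_brA algebra_simps)
qed

end

context setting begin

lemma uniq:
  assumes p1: "primeP \<iota> brB \<alpha> \<delta> brA ah s Q P1" and p2: "primeP \<iota> brB \<alpha> \<delta> brA ah s Q P2"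
    and l1: "[:e1, c1:] \<in> P1" "c1 \<notin> Q" and l2: "[:e2, c2:] \<in> P2" "c2 \<notin> Q"
  shows "P2 \<subseteq> P1"
proof -
  define C where "C = c1 * c2"
  define w where "w = c2 * e1 - c1 * e2"
  have CQ: "C \<notin> Q" using l1 l2 Qprime unfolding C_def by blast
  have Gb: "C * brB b w - w * brB b C + C * w * \<alpha> b \<in> Q" for b
  proof -
    have "c2 * c2 * (c1 * brB b e1 - c1 * c1 * \<delta> b - brB b c1 * e1 + c1 * \<alpha> b * e1)
        - c1 * c1 * (c2 * brB b e2 - c2 * c2 * \<delta> b - brB b c2 * e2 + c2 * \<alpha> b * e2) \<in> Q"
      using primeP.lin_rel(2)[OF p1 l1(1), of b] primeP.lin_rel(2)[OF p2 l2(1), of b]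
      by (intro Qdiff[of "_ * _" "_ * _"] Qideal(3))
    moreover have bw: "brB b w = c2 * brB b e1 + e1 * brB b c2 - (c1 * brB b e2 + e2 * brB b c1)"
      unfolding w_def by (simp add: derl_diff[OF derl_brB] derl_mult[OF derl_brB] algebra_simps)
    moreover have bC: "brB b C = c1 * brB b c2 + c2 * brB b c1"
      unfolding C_def by (simp add: derl_mult[OF derl_brB] algebra_simps)
    moreover have "C * brB b w - w * brB b C + C * w * \<alpha> b = c2 * c2 * (c1 * brB b e1 - c1 * c1 * \<delta> b - brB b c1 * e1 + c1 * \<alpha> b * e1)
        - c1 * c1 * (c2 * brB b e2 - c2 * c2 * \<delta> b - brB b c2 * e2 + c2 * \<alpha> b * e2)"
      by (simp only: bw bC) (simp add: C_def w_def algebra_simps)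
    ultimately show ?thesis by simp
  qed
  have H: "brB C w + w * \<alpha> C \<in> Q"
  proof -
    have "C * (brB C w + w * \<alpha> C) \<in> Q" using Gb[of C] by (simp add: brB_self algebra_simps)
    then show ?thesis using CQ Qprime by blast
  qed
  have Ea: "C * \<alpha> w - w * \<alpha> C - \<iota> s * C * w \<in> Q"
  proof -
    have "c2 * c2 * (c1 * \<alpha> e1 - \<alpha> c1 * e1 - \<iota> s * c1 * e1) - c1 * c1 * (c2 * \<alpha> e2 - \<alpha> c2 * e2 - \<iota> s * c2 * e2) \<in> Q"
      using primeP.lin_rel(1)[OF p1 l1(1)] primeP.lin_rel(1)[OF p2 l2(1)]
      by (intro Qdiff[of "_ * _" "_ * _"] Qideal(3))
    moreover have aw: "\<alpha> w = c2 * \<alpha> e1 + e1 * \<alpha> c2 - (c1 * \<alpha> e2 + e2 * \<alpha> c1)"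
      unfolding w_def by (simp add: derl_diff[OF derl_alpha] derl_mult[OF derl_alpha] algebra_simps)
    moreover have aC: "\<alpha> C = c1 * \<alpha> c2 + c2 * \<alpha> c1"
      unfolding C_def by (simp add: derl_mult[OF derl_alpha] algebra_simps)
    moreover have "C * \<alpha> w - w * \<alpha> C - \<iota> s * C * w = c2 * c2 * (c1 * \<alpha> e1 - \<alpha> c1 * e1 - \<iota> s * c1 * e1) - c1 * c1 * (c2 * \<alpha> e2 - \<alpha> c2 * e2 - \<iota> s * c2 * e2)"
      by (simp only: aw aC) (simp add: C_def w_def algebra_simps)
    ultimately show ?thesis by simp
  qed
  have "\<iota> s * (C * (w * w)) \<in> Q"
  proof -
    have "\<iota> s * (C * (w * w)) = (C * brB w w - w * brB w C + C * w * \<alpha> w) - w * (brB C w + w * \<alpha> C)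
        - w * (C * \<alpha> w - w * \<alpha> C - \<iota> s * C * w)"
      using ring_id5[of "\<iota> s" C w "brB C w" "\<alpha> w" "\<alpha> C"] by (simp add: brB_self brB_antisym[of w C])
    also have "\<dots> \<in> Q"
      apply (rule Qdiff[OF Qdiff])
        apply (rule Gb[of w])
       apply (rule Qideal(3), rule H)
      apply (rule Qideal(3), rule Ea)
      done
    finally show ?thesis .
  qed
  then have wQ: "w \<in> Q" using Qs CQ Qprime by blast
  have "smult c1 [:e2, c2:] = smult c2 [:e1, c1:] - [:w:]"
    by (simp add: w_def algebra_simps)
  also have "\<dots> \<in> P1" using l1 wQ primeP.Pdiff[OF p1] primeP.Psmult[OF p1] primeP.Pconst[OF p1] by blast
  finally have "smult c1 [:e2, c2:] \<in> P1" .
  then have phi2: "[:e2, c2:] \<in> P1" using primeP.Pcancel[OF p1, of c1] l1(2) by simp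
  show ?thesis
  proof
    fix g assume gP: "g \<in> P2"
    obtain k q r where qr: "smult (c2 ^ k) g = q * [:e2, c2:] + [:r:]" using lin_div by blast
    have "[:r:] = smult (c2 ^ k) g - q * [:e2, c2:]" using qr by simp
    also have "\<dots> \<in> P2" using gP l2 primeP.Pdiff[OF p2] primeP.Psmult[OF p2] primeP.Pmult[OF p2] by blast
    finally have "r \<in> Q" using primeP.Pconst[OF p2] by blast
    then have "q * [:e2, c2:] + [:r:] \<in> P1"
      using phi2 primeP.Padd[OF p1] primeP.Pmult[OF p1] primeP.Pconst[OF p1] by blast
    then have "[:c2 ^ k:] * g \<in> P1" using qr by simp
    then show "g \<in> P1" using primeP.Pcancel[OF p1] Qpow[OF l2(2)] by blast
  qed
qed

end

theorem proposition1p3: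
  fixes \<iota> :: "'k::field_char_0 \<Rightarrow> 'b::comm_ring_1"
    and brB :: "'b \<Rightarrow> 'b \<Rightarrow> 'b"
    and \<alpha> \<delta> :: "'b \<Rightarrow> 'b"
    and brA :: "'b poly \<Rightarrow> 'b poly \<Rightarrow> 'b poly"
    and \<alpha>hat :: "'b poly \<Rightarrow> 'b poly"
    and s :: 'k
    and Q :: "'b set"
  assumes hom: "alg_hom_from \<iota>"
    and brB: "is_poisson_bracket \<iota> brB"
    and alpha: "is_poisson_deriv \<iota> brB \<alpha>"
    and delta: "is_kderiv \<iota> \<delta>"
    and delta_br: "\<forall>a b. \<delta> (brB a b) = brB (\<delta> a) b + brB a (\<delta> b) + \<alpha> a * \<delta> b - \<delta> a * \<alpha> b"
    and brA: "is_poisson_bracket (\<lambda>c. [:\<iota> c:]) brA"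
    and brA_ext: "\<forall>a b. brA [:a:] [:b:] = [:brB a b:]"
    and brA_x: "\<forall>b. brA [:0, 1:] [:b:] = [:\<delta> b, \<alpha> b:]"
    and ahat: "is_kderiv (\<lambda>c. [:\<iota> c:]) \<alpha>hat"
    and ahat_ext: "\<forall>b. \<alpha>hat [:b:] = [:\<alpha> b:]"
    and s: "s \<noteq> 0"
    and ahat_x: "\<alpha>hat [:0, 1:] = [:\<iota> s:] * [:0, 1:]"
    and Q: "is_poisson_prime brB Q"
  shows "finite {P. is_poisson_prime brA P \<and> \<alpha>hat ` P \<subseteq> P \<and> {b. [:b:] \<in> P} = Q}
         \<and> card {P. is_poisson_prime brA P \<and> \<alpha>hat ` P \<subseteq> P \<and> {b. [:b:] \<in> P} = Q} \<le> 2"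

proof -
  have set: "setting \<iota> brB \<alpha> \<delta> brA \<alpha>hat s Q"
    using hom brB alpha delta brA brA_ext brA_x ahat ahat_ext s ahat_x Q by (rule setting.intro)
  interpret L: setting \<iota> brB \<alpha> \<delta> brA \<alpha>hat s Q by (rule set)
  define S where "S = {P. is_poisson_prime brA P \<and> \<alpha>hat ` P \<subseteq> P \<and> {b. [:b:] \<in> P} = Q}"
  have pP: "primeP \<iota> brB \<alpha> \<delta> brA \<alpha>hat s Q P" if "P \<in> S" for P
    using set that unfolding S_def by (intro primeP.intro primeP_axioms.intro) auto
  have key: "\<exists>l e. l \<notin> Q \<and> [:e, l:] \<in> P" if PS: "P \<in> S" and Pn: "P \<noteq> qa Q" for P
  proof -
    have "qa Q \<subseteq> P" using primeP.qa_sub[OF pP[OF PS]] by blast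
    then obtain f0 where "f0 \<in> P" "f0 \<notin> qa Q" using Pn by blast
    then show ?thesis by (rule primeP.exists_linear[OF pP[OF PS]])
  qed
  have eq: "P1 = P2" if th: "P1 \<in> S" "P2 \<in> S" "P1 \<noteq> qa Q" "P2 \<noteq> qa Q" for P1 P2
  proof -
    obtain l1 e1 where 1: "l1 \<notin> Q" "[:e1, l1:] \<in> P1" using key th by blast
    obtain l2 e2 where 2: "l2 \<notin> Q" "[:e2, l2:] \<in> P2" using key th by blast
    show ?thesis
      using L.uniq[OF pP[OF th(1)] pP[OF th(2)] 1(2,1) 2(2,1)]
        L.uniq[OF pP[OF th(2)] pP[OF th(1)] 2(2,1) 1(2,1)] by blast
  qed
  have "\<exists>P0. S \<subseteq> {qa Q, P0}"
  proof (cases "\<exists>P1\<in>S. P1 \<noteq> qa Q")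
    case True
    then obtain P1 where "P1 \<in> S" "P1 \<noteq> qa Q" by blast
    then have "S \<subseteq> {qa Q, P1}" using eq by blast
    then show ?thesis by blast
  next
    case False
    then show ?thesis by blast
  qed
  then obtain P0 where sub: "S \<subseteq> {qa Q, P0}" by blast
  have fin: "finite S" using sub finite_subset by blast
  have "card S \<le> card {qa Q, P0}" by (rule card_mono) (simp, rule sub)
  also have "\<dots> \<le> 2" by (simp add: card_insert_if)
  finally show ?thesis using fin unfolding S_def by blast
qed

end
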